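(* Let $v\in\Delta$ be an equilibrium, i.e. $F(v)=0$. Then for $i,j\in\mathrm{supp}(v)$, $$D_{e_i-e_j}F(v)=(\alpha-1)(e_i-e_j)+\alpha\sum_{\ell}\frac{v_\ell^\alpha\big(A_{\ell,i}v_i^{\alpha-1}-A_{\ell,j}v_j^{\alpha-1}\big)}{H(v)}\,e_\ell,$$ and for $i\notin\mathrm{supp}(v)$, $$D_{e_i-v}F(v)=-(e_i-v).$$ Furthermore, all eigenvalues of $DF(v)$ are real.
   Context: Let $N\ge2$, $\alpha>1$, and let $A=(A_{i,j})_{i,j\le N}$ be a symmetric matrix with nonnegative entries, $A_{i,j}>0$ for $i\ne j$, and $\sum_j A_{i,j}$ independent of $i$. Let $(e_1,\dots,e_N)$ be the canonical basis of $\mathbb R^N$. Let $\Delta=\{v\in\mathbb R_+^N:\ \sum_i v_i=1,\ v_i\le 3/4 \text{ whenever } A_{i,i}=0\}$. For $v$ with nonnegative coordinates let $v^\alpha=(v_i^\alpha)_i$, $H(v)=\sum_{i,j}A_{i,j}v_i^\alpha v_j^\alpha$ and $\pi_i(v)=v_i^\alpha(Av^\alpha)_i/H(v)$; on $\Delta$ the vector field is $F(v)=-v+\pi(v)$, and $DF(v)$ (resp. $D_xF(v)$) denotes the differential (resp. directional derivative in direction $x$) at $v$ of the map $v\mapsto -v+\pi(v)$, viewed as a linear map of $T_0\Delta=\{x\in\mathbb R^N:\sum_ix_i=0\}$. $\mathrm{supp}(v)=\{i: v_i\neq0\}$. *)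

theory Defs
  imports "HOL-Analysis.Analysis"
begin

text \<open>Vectors in R^N are modelled as real^'n (N = CARD('n)); matrices as real^'n^'n.\<close>

definition vpow :: "real \<Rightarrow> real^'n \<Rightarrow> real^'n" where
  "vpow \<alpha> v = (\<chi> i. v$i powr \<alpha>)"

definition Hfun :: "real^'n^'n \<Rightarrow> real \<Rightarrow> real^'n \<Rightarrow> real" where
  "Hfun A \<alpha> v = (\<Sum>i\<in>UNIV. \<Sum>j\<in>UNIV. A$i$j * v$i powr \<alpha> * v$j powr \<alpha>)"

definition pimap :: "real^'n^'n \<Rightarrow> real \<Rightarrow> real^'n \<Rightarrow> real^'n" where
  "pimap A \<alpha> v = (\<chi> i. v$i powr \<alpha> * (A *v vpow \<alpha> v)$i / Hfun A \<alpha> v)"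

definition Fmap :: "real^'n^'n \<Rightarrow> real \<Rightarrow> real^'n \<Rightarrow> real^'n" where
  "Fmap A \<alpha> v = - v + pimap A \<alpha> v"

definition Simplex :: "real^'n^'n \<Rightarrow> (real^'n) set" where
  "Simplex A = {v. (\<forall>i. 0 \<le> v$i) \<and> (\<Sum>i\<in>UNIV. v$i) = 1 \<and> (\<forall>i. A$i$i = 0 \<longrightarrow> v$i \<le> 3/4)}"

definition supp :: "real^'n \<Rightarrow> 'n set" where
  "supp v = {i. v$i \<noteq> 0}"

definition T0 :: "(real^'n) set" where
  "T0 = {x. (\<Sum>i\<in>UNIV. x$i) = 0}"

text \<open>The nonnegative orthant, the natural domain of v -> v^alpha.\<close>
definition orthant :: "(real^'n) set" where
  "orthant = {x. \<forall>i. 0 \<le> x$i}"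

text \<open>lam is an eigenvalue of the linear map D viewed on the real subspace S,
  i.e. an eigenvalue of its complexification: there is a nonzero x + i y
  (x, y in S) with D(x + i y) = lam (x + i y).\<close>
definition eigenvalue_on :: "(real^'n \<Rightarrow> real^'n) \<Rightarrow> (real^'n) set \<Rightarrow> complex \<Rightarrow> bool" where
  "eigenvalue_on D S lam \<longleftrightarrow> (\<exists>x\<in>S. \<exists>y\<in>S. (x \<noteq> 0 \<or> y \<noteq> 0) \<and>
      D x = Re lam *\<^sub>R x - Im lam *\<^sub>R y \<and> D y = Im lam *\<^sub>R x + Re lam *\<^sub>R y)"

end

theory Submission
  imports Defs
begin


lemma abs_powr_deriv0:
  assumes "(a::real) > 1"
  shows "((\<lambda>t::real. \<bar>t\<bar> powr a) has_real_derivative 0) (at 0)"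
proof -
  have "((\<lambda>y. \<bar>y\<bar> powr (a - 1)) \<longlongrightarrow> 0) (at (0::real))"
    by (rule tendsto_zero_powrI) (use assms in \<open>auto intro!: tendsto_eq_intros\<close>)
  then have "((\<lambda>y. \<bar>\<bar>y\<bar> powr a / y\<bar>) \<longlongrightarrow> 0) (at (0::real))"
  proof (rule Lim_transform_eventually)
    show "\<forall>\<^sub>F y in at 0. \<bar>y\<bar> powr (a - 1) = \<bar>\<bar>y\<bar> powr a / y\<bar>"
      unfolding eventually_at_filter
      by (auto simp: abs_divide powr_diff)
  qed
  then have "((\<lambda>y. \<bar>y\<bar> powr a / y) \<longlongrightarrow> 0) (at (0::real))"
    by (rule iffD1[OF tendsto_rabs_zero_iff])
  then show ?thesis
    by (simp add: has_field_derivative_iff)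
qed

lemma abs_powr_deriv:
  assumes "(a::real) > 1" "z \<ge> 0"
  shows "((\<lambda>t::real. \<bar>t\<bar> powr a) has_real_derivative a * z powr (a - 1)) (at z)"
proof (cases "z = 0")
  case True
  then show ?thesis using abs_powr_deriv0[OF assms(1)] by simp
next
  case False
  then have z: "z > 0" using assms by simp
  show ?thesis
    by (rule has_field_derivative_transform_within_open[OF has_real_derivative_powr[OF z], of "{0<..}"])
       (use z in auto)
qed



definition pp :: "real \<Rightarrow> real^'n \<Rightarrow> real^'n \<Rightarrow> 'n \<Rightarrow> real" where
  "pp a v h k = a * v$k powr (a-1) * h$k"

definition D0 :: "real^'n^'n \<Rightarrow> real \<Rightarrow> real^'n \<Rightarrow> real^'n \<Rightarrow> real^'n" where
  "D0 A a v h = (\<chi> l. - h$l + ((pp a v h l * (A *v vpow a v)$l + v$l powr a * (\<Sum>k\<in>UNIV. A$l$k * pp a v h k)) / Hfun A a v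
     - v$l powr a * (A *v vpow a v)$l * (\<Sum>i\<in>UNIV. \<Sum>j\<in>UNIV. A$i$j * (pp a v h i * v$j powr a + v$i powr a * pp a v h j)) / (Hfun A a v)^2))"

lemma dP:
  assumes "a > 1" "0 \<le> v$k"
  shows "((\<lambda>x::real^'n. \<bar>x$k\<bar> powr a) has_derivative (\<lambda>h. pp a v h k)) (at v)"
proof -
  have 1: "((\<lambda>x::real^'n. x$k) has_derivative (\<lambda>h. h$k)) (at v)"
    by (rule bounded_linear.has_derivative[OF bounded_linear_vec_nth]) (rule has_derivative_ident)
  have 2: "((\<lambda>t::real. \<bar>t\<bar> powr a) has_derivative (*) (a * (v$k) powr (a - 1))) (at (v$k))"
    using abs_powr_deriv[OF assms] by (simp add: has_field_derivative_def)
  show ?thesis using has_derivative_compose[OF 1 2]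
    by (simp add: pp_def mult.commute)
qed

lemma deriv_Fabs:
  fixes A :: "real^'n^'n"
  assumes a: "a > 1" and v: "\<forall>i. 0 \<le> v$i" and H: "Hfun A a v \<noteq> 0"
  shows "((\<lambda>x. -x + pimap A a (\<chi> i. \<bar>x$i\<bar>)) has_derivative D0 A a v) (at v)"
proof -
  have dP': "((\<lambda>x::real^'n. \<bar>x$k\<bar> powr a) has_derivative (\<lambda>h. pp a v h k)) (at v)" for k
    using dP a v by blast
  have dQ: "((\<lambda>x::real^'n. \<Sum>k\<in>UNIV. A$l$k * \<bar>x$k\<bar> powr a) has_derivative (\<lambda>h. \<Sum>k\<in>UNIV. A$l$k * pp a v h k)) (at v)" for l
    by (intro has_derivative_sum has_derivative_mult_right dP')
  have dH: "((\<lambda>x::real^'n. \<Sum>i\<in>UNIV. \<Sum>j\<in>UNIV. A$i$j * \<bar>x$i\<bar> powr a * \<bar>x$j\<bar> powr a) has_derivative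
     (\<lambda>h. \<Sum>i\<in>UNIV. \<Sum>j\<in>UNIV. A$i$j * \<bar>v$i\<bar> powr a * pp a v h j + A$i$j * pp a v h i * \<bar>v$j\<bar> powr a)) (at v)"
    by (intro has_derivative_sum has_derivative_mult has_derivative_mult_right dP')
  have vabs: "\<bar>v$i\<bar> = v$i" for i using v by simp
  have Hv: "(\<Sum>i\<in>UNIV. \<Sum>j\<in>UNIV. A$i$j * \<bar>v$i\<bar> powr a * \<bar>v$j\<bar> powr a) = Hfun A a v"
    by (simp add: vabs Hfun_def)
  have S2: "(\<Sum>i\<in>UNIV. \<Sum>j\<in>UNIV. A$i$j * v$i powr a * pp a v h j + A$i$j * pp a v h i * v$j powr a)
     = (\<Sum>i\<in>UNIV. \<Sum>j\<in>UNIV. A$i$j * (pp a v h i * v$j powr a + v$i powr a * pp a v h j))" for h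
    by (intro sum.cong refl) (simp add: algebra_simps)
  show ?thesis
  proof (subst has_derivative_componentwise_within, intro ballI)
    fix b :: "real^'n" assume "b \<in> Basis"
    then obtain l where b: "b = axis l 1" by (auto simp: Basis_vec_def)
    have e: "(\<lambda>x. (-x + pimap A a (\<chi> i. \<bar>x$i\<bar>)) \<bullet> b) = (\<lambda>x. - x$l + \<bar>x$l\<bar> powr a * (\<Sum>k\<in>UNIV. A$l$k * \<bar>x$k\<bar> powr a) /
        (\<Sum>i\<in>UNIV. \<Sum>j\<in>UNIV. A$i$j * \<bar>x$i\<bar> powr a * \<bar>x$j\<bar> powr a))"
      by (simp add: b inner_axis pimap_def vpow_def Hfun_def matrix_vector_mult_def)
    have "((\<lambda>x. - x$l + \<bar>x$l\<bar> powr a * (\<Sum>k\<in>UNIV. A$l$k * \<bar>x$k\<bar> powr a) /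
        (\<Sum>i\<in>UNIV. \<Sum>j\<in>UNIV. A$i$j * \<bar>x$i\<bar> powr a * \<bar>x$j\<bar> powr a)) has_derivative (\<lambda>h. D0 A a v h \<bullet> b)) (at v)"
      apply (rule has_derivative_eq_rhs)
       apply (rule has_derivative_add)
       apply (rule has_derivative_minus)
       apply (rule bounded_linear.has_derivative[OF bounded_linear_vec_nth])
       apply (rule has_derivative_ident)
       apply (rule has_derivative_divide)
       apply (rule has_derivative_mult)
       apply (rule dP')
       apply (rule dQ)
       apply (rule dH)
      using H Hv
       apply simp
      apply (simp add: fun_eq_iff b inner_axis D0_def vabs matrix_vector_mult_def vpow_def Hfun_def[symmetric])
      apply (intro allI)
      apply (subst S2)
      using H apply (simp add: divide_inverse power2_eq_square algebra_simps)
      done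
    then show "((\<lambda>x. (-x + pimap A a (\<chi> i. \<bar>x$i\<bar>)) \<bullet> b) has_derivative (\<lambda>h. D0 A a v h \<bullet> b)) (at v)"
      by (simp only: e)
  qed
qed



lemma powr_split:
  assumes "0 \<le> (x::real)" "a > 1"
  shows "x powr a = x powr (a - 1) * x"
proof (cases "x = 0")
  case False
  then have "x > 0" using assms by simp
  then show ?thesis using powr_add[of x "a-1" 1] by simp
qed simp

lemma D0_simp:
  fixes A :: "real^'n^'n"
  assumes a: "a > 1" and v: "\<forall>i. 0 \<le> v$i" and H: "Hfun A a v \<noteq> 0"
    and sym: "\<forall>i j. A$i$j = A$j$i"
    and eq: "\<forall>l. v$l = v$l powr a * (A *v vpow a v)$l / Hfun A a v"
  shows "D0 A a v h $ l = - h$l + a * (if v$l = 0 then 0 else h$l)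
      + a * v$l powr a * (\<Sum>k\<in>UNIV. A$l$k * v$k powr (a-1) * h$k) / Hfun A a v
      - 2 * a * v$l * (\<Sum>k\<in>UNIV. if v$k = 0 then 0 else h$k)"
proof -
  define H where "H = Hfun A a v"
  define Q where "Q k = (A *v vpow a v)$k" for k
  define c where "c k = v$k powr (a-1)" for k
  have Qd: "Q k = (\<Sum>j\<in>UNIV. A$k$j * v$j powr a)" for k
    by (simp add: Q_def matrix_vector_mult_def vpow_def)
  have K1: "v$k powr a = c k * v$k" for k
    unfolding c_def using powr_split[of "v$k" a] v a by simp
  have K2: "c k * Q k = (if v$k = 0 then 0 else H)" for k
  proof (cases "v$k = 0")
    case True then show ?thesis by (simp add: c_def)
  next
    case False
    have "v$k = c k * v$k * Q k / H" using eq K1 by (simp add: Q_def H_def)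
    then have "v$k * H = v$k * (c k * Q k)" using H by (simp add: H_def field_simps)
    then show ?thesis using False by simp
  qed
  have pp: "pp a v h k = a * c k * h$k" for k by (simp add: pp_def c_def)
  have Hd: "(\<Sum>i\<in>UNIV. \<Sum>j\<in>UNIV. A$i$j * (pp a v h i * v$j powr a + v$i powr a * pp a v h j))
      = 2 * a * H * (\<Sum>k\<in>UNIV. if v$k = 0 then 0 else h$k)"
  proof -
    have 1: "(\<Sum>i\<in>UNIV. \<Sum>j\<in>UNIV. A$i$j * (pp a v h i * v$j powr a)) = (\<Sum>i\<in>UNIV. pp a v h i * Q i)"
      by (simp add: Qd sum_distrib_left algebra_simps)
    have 2: "(\<Sum>i\<in>UNIV. \<Sum>j\<in>UNIV. A$i$j * (v$i powr a * pp a v h j)) = (\<Sum>j\<in>UNIV. pp a v h j * Q j)"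
      apply (subst sum.swap)
      apply (simp add: Qd sum_distrib_left algebra_simps)
      apply (intro sum.cong refl)
      using sym by (simp add: algebra_simps)
    have 3: "(\<Sum>i\<in>UNIV. pp a v h i * Q i) = a * H * (\<Sum>k\<in>UNIV. if v$k = 0 then 0 else h$k)"
      apply (simp add: sum_distrib_left)
      apply (intro sum.cong refl)
      subgoal for i
      proof -
        have "pp a v h i * Q i = a * h$i * (c i * Q i)" by (simp add: pp)
        then show ?thesis using K2[of i] by simp
      qed
      done
    show ?thesis
      by (simp add: distrib_left sum.distrib 1 2 3)
  qed
  have t1: "pp a v h l * Q l = a * H * (if v$l = 0 then 0 else h$l)"
    using K2[of l] by (auto simp: pp algebra_simps)
  have t2: "(\<Sum>k\<in>UNIV. A$l$k * pp a v h k) = a * (\<Sum>k\<in>UNIV. A$l$k * v$k powr (a-1) * h$k)"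
    by (simp add: pp c_def sum_distrib_left algebra_simps)
  have t3: "v$l powr a * Q l = v$l * H" using eq H by (simp add: Q_def H_def field_simps)
  have alg: "\<And>X Y s P w x. H \<noteq> 0 \<Longrightarrow> - x + ((a*H*X + P*(a*Y))/H - w*H*(2*a*H* s)/H^2) = - x + a*X + a*P*Y/H - 2*a*w * s"
    by (simp add: field_simps power2_eq_square)
  have "D0 A a v h $ l = - h$l + ((pp a v h l * Q l + v$l powr a * (\<Sum>k\<in>UNIV. A$l$k * pp a v h k)) / H
     - v$l powr a * Q l * (2 * a * H * (\<Sum>k\<in>UNIV. if v$k = 0 then 0 else h$k)) / H^2)"
    by (simp add: D0_def Q_def H_def Hd)
  also have "\<dots> = - h$l + a * (if v$l = 0 then 0 else h$l)
      + a * v$l powr a * (\<Sum>k\<in>UNIV. A$l$k * v$k powr (a-1) * h$k) / H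
      - 2 * a * v$l * (\<Sum>k\<in>UNIV. if v$k = 0 then 0 else h$k)"
    unfolding t1 t2 t3 by (rule alg) (use H in \<open>simp add: H_def\<close>)
  finally show ?thesis by (simp add: H_def)
qed



lemma dsum_pos:
  fixes f :: "'n::finite \<Rightarrow> 'n \<Rightarrow> real"
  assumes "\<forall>i j. 0 \<le> f i j" "0 < f i0 j0"
  shows "0 < (\<Sum>i\<in>UNIV. \<Sum>j\<in>UNIV. f i j)"
  apply (rule sum_pos2[of UNIV i0])
     apply simp apply simp
   apply (rule sum_pos2[of UNIV j0]) using assms apply (auto intro!: sum_nonneg)
  done

lemma H_pos:
  fixes A :: "real^'n^'n"
  assumes a: "a > 1" and vS: "v \<in> Simplex A"
    and nn: "\<forall>i j. 0 \<le> A$i$j" and off: "\<forall>i j. i \<noteq> j \<longrightarrow> A$i$j > 0"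
  shows "Hfun A a v > 0"
proof -
  have v0: "\<forall>i. 0 \<le> v$i" and s1: "(\<Sum>i\<in>UNIV. v$i) = 1" and d34: "\<forall>i. A$i$i = 0 \<longrightarrow> v$i \<le> 3/4"
    using vS by (auto simp: Simplex_def)
  have nnt: "\<forall>i j. 0 \<le> A$i$j * v$i powr a * v$j powr a" using nn by simp
  have "\<exists>i. v$i \<noteq> 0" proof (rule ccontr) assume "\<not> ?thesis" then show False using s1 by simp qed
  then obtain i where "v$i \<noteq> 0" by blast
  then have vi: "v$i > 0" using v0[rule_format, of i] by linarith
  show ?thesis
  proof (cases "A$i$i = 0")
    case False
    then have "A$i$i > 0" using nn by (metis less_eq_real_def)
    then show ?thesis unfolding Hfun_def using vi by (intro dsum_pos[OF nnt, of i i]) simp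
  next
    case True
    then have "v$i \<le> 3/4" using d34 by simp
    have "\<exists>j. j \<noteq> i \<and> v$j \<noteq> 0"
    proof (rule ccontr)
      assume "\<not> ?thesis"
      then have "(\<Sum>k\<in>UNIV. v$k) = v$i"
        by (subst sum.remove[of UNIV i]) (auto intro!: sum.neutral)
      then show False using s1 \<open>v$i \<le> 3/4\<close> by simp
    qed
    then obtain j where j0: "j \<noteq> i" "v$j \<noteq> 0" by blast
    then have j: "j \<noteq> i" "v$j > 0" using v0[rule_format, of j] by linarith+
    then have "A$i$j > 0" using off by simp
    then show ?thesis unfolding Hfun_def using vi j by (intro dsum_pos[OF nnt, of i j]) simp
  qed
qed

lemma deriv_within:
  fixes A :: "real^'n^'n"
  assumes a: "a > 1" and v: "\<forall>i. 0 \<le> v$i" and H: "Hfun A a v \<noteq> 0"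
  shows "(Fmap A a has_derivative D0 A a v) (at v within orthant)"
proof (rule has_derivative_transform_within[of _ _ _ _ 1])
  show "((\<lambda>x. -x + pimap A a (\<chi> i. \<bar>x$i\<bar>)) has_derivative D0 A a v) (at v within orthant)"
    using has_derivative_subset[OF deriv_Fabs[OF a v H]] by blast
  show "v \<in> orthant" using v by (simp add: orthant_def)
  fix x' :: "real^'n" assume "x' \<in> orthant"
  then have "(\<chi> i. \<bar>x'$i\<bar>) = x'" by (simp add: orthant_def vec_eq_iff)
  then show "-x' + pimap A a (\<chi> i. \<bar>x'$i\<bar>) = Fmap A a x'" by (simp add: Fmap_def)
qed simp

lemma deriv_unique:
  fixes v :: "real^'n" and f :: "real^'n \<Rightarrow> real^'n"
  assumes v: "\<forall>i. 0 \<le> v$i"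
    and "(f has_derivative D) (at v within orthant)" "(f has_derivative D') (at v within orthant)"
  shows "D = D'"
proof (rule frechet_derivative_unique_within[OF assms(2,3)])
  fix i :: "real^'n" and e :: real
  assume "i \<in> Basis" "e > 0"
  then obtain k where k: "i = axis k 1" by (auto simp: Basis_vec_def)
  show "\<exists>d. 0 < \<bar>d\<bar> \<and> \<bar>d\<bar> < e \<and> v + d *\<^sub>R i \<in> orthant"
    apply (rule exI[of _ "e/2"])
    using \<open>e > 0\<close> v by (auto simp: k orthant_def axis_def)
qed



lemma axsum: "(\<Sum>l\<in>UNIV. f l *\<^sub>R axis l 1 :: real^'n)$m = f m"
proof -
  have "(\<Sum>x\<in>UNIV. f x * (if m = x then 1 else 0)) = (\<Sum>x\<in>UNIV. if m = x then f x else 0)"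
    by (rule sum.cong) auto
  then show ?thesis by (simp add: axis_def)
qed

lemma prop1:
  fixes A :: "real^'n^'n"
  assumes a: "a > 1" and v: "\<forall>i. 0 \<le> v$i" and H: "Hfun A a v \<noteq> 0"
    and sym: "\<forall>i j. A$i$j = A$j$i"
    and eq: "\<forall>l. v$l = v$l powr a * (A *v vpow a v)$l / Hfun A a v"
    and ij: "i \<in> supp v" "j \<in> supp v"
  shows "D0 A a v (axis i 1 - axis j 1) =
            (a - 1) *\<^sub>R (axis i 1 - axis j 1)
            + a *\<^sub>R (\<Sum>l\<in>UNIV. ((v$l powr a * (A$l$i * v$i powr (a - 1) - A$l$j * v$j powr (a - 1)))
                                / Hfun A a v) *\<^sub>R axis l 1)"
proof (subst vec_eq_iff, intro allI)
  fix m
  define h :: "real^'n" where "h = axis i 1 - axis j 1"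
  have vi: "v$i \<noteq> 0" "v$j \<noteq> 0" using ij by (auto simp: supp_def)
  have hk: "h$k = (if k = i then 1 else 0) - (if k = j then 1 else 0)" for k
    by (simp add: h_def axis_def)
  have hS: "(if v$k = 0 then 0 else h$k) = h$k" for k
    using vi by (auto simp: hk)
  have s: "(\<Sum>k\<in>UNIV. if v$k = 0 then 0 else h$k) = 0"
    by (simp only: hS) (simp add: hk sum_subtractf)
  have t: "(\<Sum>k\<in>UNIV. A$m$k * v$k powr (a-1) * h$k) = A$m$i * v$i powr (a - 1) - A$m$j * v$j powr (a - 1)"
  proof -
    have "A$m$k * v$k powr (a-1) * h$k = (if k = i then A$m$i * v$i powr (a - 1) else 0) - (if k = j then A$m$j * v$j powr (a - 1) else 0)" for k
      by (simp add: hk)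
    then show ?thesis by (simp add: sum_subtractf)
  qed
  show "D0 A a v (axis i 1 - axis j 1) $ m = ((a - 1) *\<^sub>R (axis i 1 - axis j 1)
            + a *\<^sub>R (\<Sum>l\<in>UNIV. ((v$l powr a * (A$l$i * v$i powr (a - 1) - A$l$j * v$j powr (a - 1)))
                                / Hfun A a v) *\<^sub>R axis l 1)) $ m"
    unfolding h_def[symmetric]
    apply (subst D0_simp[OF a v H sym eq])
    apply (simp only: s)
    apply (simp only: t)
    apply (simp only: hS)
    apply (simp only: vector_add_component vector_scaleR_component axsum)
    apply (simp add: algebra_simps)
    done
qed

lemma prop2:
  fixes A :: "real^'n^'n"
  assumes a: "a > 1" and v: "\<forall>i. 0 \<le> v$i" and H: "Hfun A a v \<noteq> 0"
    and sym: "\<forall>i j. A$i$j = A$j$i"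
    and eq: "\<forall>l. v$l = v$l powr a * (A *v vpow a v)$l / Hfun A a v"
    and s1: "(\<Sum>i\<in>UNIV. v$i) = 1"
    and i: "i \<notin> supp v"
  shows "D0 A a v (axis i 1 - v) = - (axis i 1 - v)"
proof (subst vec_eq_iff, intro allI)
  fix m
  define h :: "real^'n" where "h = axis i 1 - v"
  have vi: "v$i = 0" using i by (auto simp: supp_def)
  have hk: "h$k = (if k = i then 1 else 0) - v$k" for k
    by (simp add: h_def axis_def)
  have hS: "(if v$k = 0 then 0 else h$k) = - v$k" for k
    using vi by (auto simp: hk)
  have s: "(\<Sum>k\<in>UNIV. if v$k = 0 then 0 else h$k) = - 1"
    by (simp only: hS) (simp add: sum_negf s1)
  have t: "(\<Sum>k\<in>UNIV. A$m$k * v$k powr (a-1) * h$k) = - (A *v vpow a v)$m"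
  proof -
    have "A$m$k * v$k powr (a-1) * h$k = - (A$m$k * v$k powr a)" for k
      using vi powr_split[of "v$k" a] v a by (auto simp: hk)
    then show ?thesis by (simp add: sum_negf matrix_vector_mult_def vpow_def)
  qed
  have e: "v$m powr a * (A *v vpow a v)$m / Hfun A a v = v$m" using eq by simp
  have "D0 A a v h $ m = - h$m + a * (- v$m) + a * v$m powr a * (- (A *v vpow a v)$m) / Hfun A a v - 2 * a * v$m * (-1)"
    apply (subst D0_simp[OF a v H sym eq])
    apply (simp only: s)
    apply (simp only: t)
    apply (simp only: hS)
    done
  also have "\<dots> = - h$m - a * v$m - a * (v$m powr a * (A *v vpow a v)$m / Hfun A a v) + 2 * a * v$m"
    by (simp add: algebra_simps)
  also have "\<dots> = - h$m" unfolding e by simp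
  finally show "D0 A a v (axis i 1 - v) $ m = (- (axis i 1 - v)) $ m" by (simp add: h_def)
qed

lemma Bsym:
  fixes A :: "real^'n^'n"
  assumes a: "a > 1" and v: "\<forall>i. 0 \<le> v$i" and H: "Hfun A a v \<noteq> 0"
    and sym: "\<forall>i j. A$i$j = A$j$i"
    and eq: "\<forall>l. v$l = v$l powr a * (A *v vpow a v)$l / Hfun A a v"
  defines "g \<equiv> \<lambda>l. if v$l = 0 then 1 else 1 / v$l"
  shows "(\<Sum>l\<in>UNIV. g l * y$l * D0 A a v x $ l) = (\<Sum>l\<in>UNIV. g l * x$l * D0 A a v y $ l)"
proof -
  define c where "c l = v$l powr (a-1)" for l
  define sS where "sS l (z::real^'n) = (if v$l = 0 then 0 else z$l)" for l z
  define HH where "HH = Hfun A a v"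
  have pw: "g l * y$l * D0 A a v x $ l = g l * y$l * (-x$l + a * sS l x)
     + a/HH * (\<Sum>k\<in>UNIV. c l * y$l * A$l$k * c k * x$k) - 2*a * sS l y * (\<Sum>k\<in>UNIV. sS k x)" for x y l
  proof (cases "v$l = 0")
    case True
    then have "c l = 0" by (simp add: c_def)
    then show ?thesis
      using True by (subst D0_simp[OF a v H sym eq]) (simp add: g_def sS_def)
  next
    case False
    have P: "v$l powr a = c l * v$l" unfolding c_def using powr_split[of "v$l" a] v a by simp
    have "(\<Sum>k\<in>UNIV. c l * y$l * A$l$k * c k * x$k) = c l * y$l * (\<Sum>k\<in>UNIV. A$l$k * c k * x$k)"
      by (simp add: sum_distrib_left algebra_simps)
    then show ?thesis
      apply (subst D0_simp[OF a v H sym eq])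
      using False unfolding P
      apply (simp add: g_def sS_def c_def HH_def[symmetric] sum_def[symmetric])
      apply (simp add: field_simps)
      done
  qed
  have B: "(\<Sum>l\<in>UNIV. g l * y$l * D0 A a v x $ l) = (\<Sum>l\<in>UNIV. g l * y$l * (-x$l + a * sS l x))
     + a/HH * (\<Sum>l\<in>UNIV. \<Sum>k\<in>UNIV. c l * y$l * A$l$k * c k * x$k) - 2*a * ((\<Sum>l\<in>UNIV. sS l y) * (\<Sum>k\<in>UNIV. sS k x))" for x y
  proof -
    have "(\<Sum>l\<in>UNIV. g l * y$l * D0 A a v x $ l) = (\<Sum>l\<in>UNIV. g l * y$l * (-x$l + a * sS l x))
     + (\<Sum>l\<in>UNIV. a/HH * (\<Sum>k\<in>UNIV. c l * y$l * A$l$k * c k * x$k)) - (\<Sum>l\<in>UNIV. 2*a * sS l y * (\<Sum>k\<in>UNIV. sS k x))"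
      by (simp only: pw sum.distrib sum_subtractf)
    also have "\<dots> = (\<Sum>l\<in>UNIV. g l * y$l * (-x$l + a * sS l x))
     + a/HH * (\<Sum>l\<in>UNIV. \<Sum>k\<in>UNIV. c l * y$l * A$l$k * c k * x$k) - 2*a * ((\<Sum>l\<in>UNIV. sS l y) * (\<Sum>k\<in>UNIV. sS k x))"
      by (simp only: sum_distrib_left[symmetric] sum_distrib_right[symmetric] mult.assoc)
    finally show ?thesis .
  qed
  have 1: "(\<Sum>l\<in>UNIV. g l * y$l * (-x$l + a * sS l x)) = (\<Sum>l\<in>UNIV. g l * x$l * (-y$l + a * sS l y))"
    by (intro sum.cong refl) (simp add: sS_def algebra_simps)
  have 2: "(\<Sum>l\<in>UNIV. \<Sum>k\<in>UNIV. c l * y$l * A$l$k * c k * x$k) = (\<Sum>l\<in>UNIV. \<Sum>k\<in>UNIV. c l * x$l * A$l$k * c k * y$k)"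
    apply (subst sum.swap)
    apply (intro sum.cong refl)
    using sym by (simp add: algebra_simps)
  show ?thesis unfolding B 1 2 by (simp add: algebra_simps)
qed

lemma eig_real:
  fixes A :: "real^'n^'n"
  assumes a: "a > 1" and v: "\<forall>i. 0 \<le> v$i" and H: "Hfun A a v \<noteq> 0"
    and sym: "\<forall>i j. A$i$j = A$j$i"
    and eq: "\<forall>l. v$l = v$l powr a * (A *v vpow a v)$l / Hfun A a v"
    and ev: "eigenvalue_on (D0 A a v) S lam"
  shows "Im lam = 0"
proof -
  define g where "g = (\<lambda>l. if v$l = 0 then 1 else 1 / v$l)"
  have gpos: "g l > 0" for l using v[rule_format, of l] by (auto simp: g_def)
  obtain x y where xy: "x \<noteq> 0 \<or> y \<noteq> 0" and Dx: "D0 A a v x = Re lam *\<^sub>R x - Im lam *\<^sub>R y"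
    and Dy: "D0 A a v y = Im lam *\<^sub>R x + Re lam *\<^sub>R y"
    using ev unfolding eigenvalue_on_def by blast
  define r where "r = Re lam"
  define b where "b = Im lam"
  define N where "N z w = (\<Sum>l\<in>UNIV. g l * z$l * w$l)" for z w :: "real^'n"
  have Ns: "N z w = N w z" for z w unfolding N_def by (intro sum.cong refl) simp
  have tnn: "0 \<le> g k * z$k * z$k" for k and z :: "real^'n"
    using gpos[of k] by (metis mult.assoc mult_nonneg_nonneg less_imp_le zero_le_square)
  have tpos: "0 < g k * z$k * z$k" if "z$k \<noteq> 0" for k and z :: "real^'n"
    using gpos[of k] that by (metis mult.assoc mult_pos_pos not_real_square_gt_zero)
  have Npos: "N z z > 0" if nz: "z \<noteq> 0" for z
  proof -
    obtain l where "z$l \<noteq> 0" using nz by (auto simp: vec_eq_iff)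
    then show ?thesis unfolding N_def
      by (intro sum_pos2[of UNIV l]) (auto intro: tnn tpos)
  qed
  have Nnn: "N z z \<ge> 0" for z
    unfolding N_def by (intro sum_nonneg tnn)
  have "(\<Sum>l\<in>UNIV. g l * y$l * D0 A a v x $ l) = (\<Sum>l\<in>UNIV. g l * x$l * D0 A a v y $ l)"
    using Bsym[OF a v H sym eq] unfolding g_def by blast
  then have "r * N y x - b * N y y = b * N x x + r * N x y"
    unfolding Dx Dy N_def r_def b_def
    by (simp add: algebra_simps sum.distrib sum_subtractf sum_distrib_left)
  then have "b * (N x x + N y y) = 0" using Ns[of x y] by (simp add: algebra_simps)
  moreover have "N x x + N y y > 0"
    using xy Npos Nnn by (meson add_pos_nonneg add_nonneg_pos)
  ultimately show ?thesis by (simp add: b_def)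
qed


theorem lemma3p7:
  fixes A :: "real^'n^'n" and \<alpha> :: real and v :: "real^'n"
  assumes "CARD('n) \<ge> 2"
    and "\<alpha> > 1"
    and "\<forall>i j. A$i$j = A$j$i"
    and "\<forall>i j. 0 \<le> A$i$j"
    and "\<forall>i j. i \<noteq> j \<longrightarrow> A$i$j > 0"
    and "\<exists>c. \<forall>i. (\<Sum>j\<in>UNIV. A$i$j) = c"
    and "v \<in> Simplex A"
    and "Fmap A \<alpha> v = 0"
  shows "(\<exists>D. (Fmap A \<alpha> has_derivative D) (at v within orthant)) \<and>
    (\<forall>D. (Fmap A \<alpha> has_derivative D) (at v within orthant) \<longrightarrow>
       (\<forall>i\<in>supp v. \<forall>j\<in>supp v.
          D (axis i 1 - axis j 1) =
            (\<alpha> - 1) *\<^sub>R (axis i 1 - axis j 1)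
            + \<alpha> *\<^sub>R (\<Sum>l\<in>UNIV. ((v$l powr \<alpha> * (A$l$i * v$i powr (\<alpha> - 1) - A$l$j * v$j powr (\<alpha> - 1)))
                                / Hfun A \<alpha> v) *\<^sub>R axis l 1)) \<and>
       (\<forall>i. i \<notin> supp v \<longrightarrow> D (axis i 1 - v) = - (axis i 1 - v)) \<and>
       (\<forall>lam. eigenvalue_on D T0 lam \<longrightarrow> Im lam = 0))"
proof -
  note a = assms(2) and sym = assms(3)
  have v: "\<forall>i. 0 \<le> v$i" and s1: "(\<Sum>i\<in>UNIV. v$i) = 1"
    using assms(7) by (auto simp: Simplex_def)
  have Hp: "Hfun A \<alpha> v > 0" by (rule H_pos[OF a assms(7,4,5)])
  then have H: "Hfun A \<alpha> v \<noteq> 0" by simp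
  have pv: "pimap A \<alpha> v = v" using assms(8) by (simp add: Fmap_def)
  have eq: "\<forall>l. v$l = v$l powr \<alpha> * (A *v vpow \<alpha> v)$l / Hfun A \<alpha> v"
  proof
    fix l show "v$l = v$l powr \<alpha> * (A *v vpow \<alpha> v)$l / Hfun A \<alpha> v"
      using arg_cong[OF pv, of "\<lambda>w. w$l"] by (simp add: pimap_def)
  qed
  have dw: "(Fmap A \<alpha> has_derivative D0 A \<alpha> v) (at v within orthant)"
    by (rule deriv_within[OF a v H])
  show ?thesis
  proof (intro conjI allI impI)
    show "\<exists>D. (Fmap A \<alpha> has_derivative D) (at v within orthant)" using dw by blast
  next
    fix D assume hD: "(Fmap A \<alpha> has_derivative D) (at v within orthant)"
    have DD: "D = D0 A \<alpha> v" by (rule deriv_unique[OF v hD dw])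
    show "\<forall>i\<in>supp v. \<forall>j\<in>supp v.
          D (axis i 1 - axis j 1) =
            (\<alpha> - 1) *\<^sub>R (axis i 1 - axis j 1)
            + \<alpha> *\<^sub>R (\<Sum>l\<in>UNIV. ((v$l powr \<alpha> * (A$l$i * v$i powr (\<alpha> - 1) - A$l$j * v$j powr (\<alpha> - 1)))
                                / Hfun A \<alpha> v) *\<^sub>R axis l 1)"
      unfolding DD using prop1[OF a v H sym eq] by blast
    fix i show "i \<notin> supp v \<Longrightarrow> D (axis i 1 - v) = - (axis i 1 - v)"
      unfolding DD by (rule prop2[OF a v H sym eq s1])
  next
    fix D lam assume hD: "(Fmap A \<alpha> has_derivative D) (at v within orthant)" and ev: "eigenvalue_on D T0 lam"
    have DD: "D = D0 A \<alpha> v" by (rule deriv_unique[OF v hD dw])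
    show "Im lam = 0" using ev unfolding DD by (rule eig_real[OF a v H sym eq])
  qed
qed

end
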